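(* Let $R(x)=\sum_{d=1}^{d_{\max}} R_d x^d$ be a generator degree distribution, fix $r=m/n>0$, and let $l_{\mathrm{avg}} = \frac{n}{m}R'(1)$ and $\lambda(x)=e^{l_{\mathrm{avg}}(x-1)}$. Suppose transmission takes place over the binary erasure channel with erasure probability $\epsilon\in(0,1)$. Then the error floor $P_e$ of the $(\lambda(x),R(x))$ LDGM ensemble satisfies $$P_e \;\ge\; \frac{1}{2}\,\lambda(\epsilon)\Bigl(1+ l_{\mathrm{avg}}\, (1-\epsilon)\Bigl(1-\frac{R'(1-\lambda(\epsilon))}{R'(1)}\Bigr)\Bigr).$$ Consequently, for this lower bound to tend to zero at a fixed erasure probability $\epsilon$, it is necessary that $R'(1)$ tend to infinity.
   Context: The LDGM ensemble with $m$ information bits and $n$ generator nodes is constructed as follows. The information bits $u_1,\dots,u_m$ are i.i.d. uniform in $\{0,1\}$. Each generator node independently chooses a degree $d$ with probability $R_d$ and a uniformly random $d$-subset $\{i_1,\dots,i_d\}$ of the information bits. It outputs $u_{i_1}+\dots+u_{i_d} \pmod 2$, which is sent through a BEC($\epsilon$). The limit $m,n\to\infty$ is taken with $n/m$ fixed. In this limit the information-bit degree distribution is Poisson with node-perspective generating function $\lambda(x)=e^{l_{\mathrm{avg}}(x-1)}$, $l_{\mathrm{avg}}=\frac{n}{m}R'(1)$. The error floor $P_e$ is the asymptotic (as $m\to\infty$) bit error probability of the information bits under belief-propagation (peeling) decoding run until no further progress is possible. Information bits that remain undetermined are guessed uniformly at random. *)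

theory Defs
  imports "HOL-Probability.Probability"
begin

text \<open>Generator degree distribution: a pmf R on degrees with support in {1..dmax};
  R d is the probability R_d. Its generating polynomial and derivative:\<close>

definition Rpoly :: "nat \<Rightarrow> nat pmf \<Rightarrow> real \<Rightarrow> real" where
  "Rpoly dmax R x = (\<Sum>d=1..dmax. pmf R d * x ^ d)"

definition Rder :: "nat \<Rightarrow> nat pmf \<Rightarrow> real \<Rightarrow> real" where
  "Rder dmax R x = (\<Sum>d=1..dmax. real d * pmf R d * x ^ (d - 1))"

text \<open>One generator node with m information bits: degree d drawn from R, a uniformly
  random d-subset of {0..<m} (min d m only matters for m < d, irrelevant asymptotically),
  and an erasure flag (True = erased) drawn as Bernoulli(eps).\<close>

definition ldgm_gen :: "nat pmf \<Rightarrow> real \<Rightarrow> nat \<Rightarrow> (nat set \<times> bool) pmf" where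
  "ldgm_gen R eps m =
     do { d \<leftarrow> R;
          S \<leftarrow> pmf_of_set {S. S \<subseteq> {..<m} \<and> card S = min d m};
          e \<leftarrow> bernoulli_pmf eps;
          return_pmf (S, e) }"

definition ldgm_graph :: "nat pmf \<Rightarrow> real \<Rightarrow> nat \<Rightarrow> nat \<Rightarrow> (nat \<Rightarrow> nat set \<times> bool) pmf" where
  "ldgm_graph R eps m n = Pi_pmf {..<n} ({}, True) (\<lambda>_. ldgm_gen R eps m)"

text \<open>Bits determined by peeling (BP on the BEC) run until no further progress:
  the least set closed under "an unerased generator all of whose neighbours but i are
  known reveals i".\<close>

inductive_set recovered :: "(nat \<Rightarrow> nat set \<times> bool) \<Rightarrow> nat \<Rightarrow> nat set"
  for G :: "nat \<Rightarrow> nat set \<times> bool" and n :: nat where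
  peel: "\<lbrakk> j < n; \<not> snd (G j); i \<in> fst (G j); \<forall>k\<in>fst (G j). k \<noteq> i \<longrightarrow> k \<in> recovered G n \<rbrakk>
         \<Longrightarrow> i \<in> recovered G n"

text \<open>Bit error probability with m information bits and n generators: a bit is in error
  iff it is undetermined and the uniform random guess (fair coin c, True = wrong guess)
  is wrong; averaged over the m information bits.\<close>

definition bit_error_prob :: "nat pmf \<Rightarrow> real \<Rightarrow> nat \<Rightarrow> nat \<Rightarrow> real" where
  "bit_error_prob R eps m n =
     (1 / real m) * (\<Sum>i<m. measure_pmf.prob
        (pair_pmf (ldgm_graph R eps m n) (bernoulli_pmf (1/2)))
        {(G, c). i \<notin> recovered G n \<and> c})"

definition lavg :: "nat \<Rightarrow> nat pmf \<Rightarrow> real \<Rightarrow> real" where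
  "lavg dmax R r = Rder dmax R 1 / r"

definition lam :: "nat \<Rightarrow> nat pmf \<Rightarrow> real \<Rightarrow> real \<Rightarrow> real" where
  "lam dmax R r x = exp (lavg dmax R r * (x - 1))"

definition ldgm_bound :: "nat \<Rightarrow> nat pmf \<Rightarrow> real \<Rightarrow> real \<Rightarrow> real" where
  "ldgm_bound dmax R r eps =
     1/2 * lam dmax R r eps *
       (1 + lavg dmax R r * (1 - eps) *
            (1 - Rder dmax R (1 - lam dmax R r eps) / Rder dmax R 1))"

end

theory Submission
  imports Defs "HOL-Real_Asymp.Real_Asymp"
begin



lemma pair_half:
  fixes M :: "'a pmf"
  assumes "finite (set_pmf M)"
  shows "measure_pmf.prob (pair_pmf M (bernoulli_pmf (1/2))) {(G, c). P G \<and> c}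
         = 1/2 * measure_pmf.expectation M (\<lambda>G. if P G then 1 else 0)"
proof -
  have "measure_pmf.prob (pair_pmf M (bernoulli_pmf (1/2))) {(G, c). P G \<and> c}
     = measure_pmf.expectation (pair_pmf M (bernoulli_pmf (1/2))) (indicator {(G, c). P G \<and> c})"
    by simp
  also have "\<dots> = (\<Sum>a\<in>set_pmf M. pmf M a *\<^sub>R measure_pmf.expectation
        (bernoulli_pmf (1/2) \<bind> (\<lambda>y. return_pmf (a, y))) (indicator {(G, c). P G \<and> c}))"
    unfolding pair_pmf_def
    by (rule pmf_expectation_bind) (auto simp: assms)
  also have "\<dots> = (\<Sum>a\<in>set_pmf M. pmf M a * (1/2 * (if P a then 1 else 0)))"
  proof (intro sum.cong refl)
    fix a
    have "measure_pmf.expectation (bernoulli_pmf (1/2) \<bind> (\<lambda>y. return_pmf (a, y))) (indicator {(G, c). P G \<and> c} :: _ \<Rightarrow> real)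
      = (\<Sum>b\<in>UNIV. pmf (bernoulli_pmf (1/2)) b *\<^sub>R measure_pmf.expectation (return_pmf (a, b)) (indicator {(G, c). P G \<and> c}))"
      by (rule pmf_expectation_bind) auto
    also have "\<dots> = 1/2 * (if P a then 1 else 0)"
      by (simp add: UNIV_bool indicator_def)
    finally show "pmf M a *\<^sub>R measure_pmf.expectation (bernoulli_pmf (1/2) \<bind> (\<lambda>y. return_pmf (a, y))) (indicator {(G, c). P G \<and> c} :: _ \<Rightarrow> real)
       = pmf M a * (1/2 * (if P a then 1 else 0))" by simp
  qed
  also have "\<dots> = 1/2 * (\<Sum>a\<in>set_pmf M. (if P a then 1 else 0) * pmf M a)"
    by (simp add: sum_distrib_left mult_ac)
  also have "(\<Sum>a\<in>set_pmf M. (if P a then 1 else 0) * pmf M a) = measure_pmf.expectation M (\<lambda>G. if P G then 1 else 0)"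
    by (rule integral_measure_pmf_real[symmetric]) (auto simp: assms)
  finally show ?thesis .
qed




definition Ss :: "nat \<Rightarrow> nat \<Rightarrow> nat set set" where
  "Ss m c = {S. S \<subseteq> {..<m} \<and> card S = c}"

lemma Ss_finite: "finite (Ss m c)"
  unfolding Ss_def by (rule finite_subset[of _ "Pow {..<m}"]) auto

lemma Ss_card: "card (Ss m c) = m choose c"
  unfolding Ss_def using n_subsets[of "{..<m}" c] by simp

lemma Ss_nonempty: "c \<le> m \<Longrightarrow> Ss m c \<noteq> {}"
proof -
  assume "c \<le> m"
  then have "{..<c} \<in> Ss m c" unfolding Ss_def by auto
  then show ?thesis by auto
qed

lemma gen_inner_finite: "finite (set_pmf (bernoulli_pmf eps \<bind> (\<lambda>e. return_pmf (S, e))))"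
  by (rule finite_subset[of _ "{S} \<times> UNIV"]) auto

lemma exp_gen:
  fixes f :: "nat set \<times> bool \<Rightarrow> real"
  assumes R: "set_pmf R \<subseteq> {1..dmax}" and e: "0 \<le> eps" "eps \<le> 1"
  shows "measure_pmf.expectation (ldgm_gen R eps m) f =
     (\<Sum>d=1..dmax. pmf R d * ((\<Sum>S\<in>Ss m (min d m). eps * f (S, True) + (1 - eps) * f (S, False))
         / real (card (Ss m (min d m)))))"
proof -
  have fin2: "finite (set_pmf (pmf_of_set (Ss m (min d m)) \<bind> (\<lambda>S. bernoulli_pmf eps \<bind> (\<lambda>e. return_pmf (S, e)))))" for d
  proof -
    have "set_pmf (pmf_of_set (Ss m (min d m)) \<bind> (\<lambda>S. bernoulli_pmf eps \<bind> (\<lambda>e. return_pmf (S, e))))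
       \<subseteq> Ss m (min d m) \<times> UNIV"
      using Ss_finite[of m "min d m"] Ss_nonempty[of "min d m" m] by auto
    then show ?thesis by (rule finite_subset) (simp add: Ss_finite)
  qed
  have "measure_pmf.expectation (ldgm_gen R eps m) f =
     (\<Sum>d\<in>{1..dmax}. pmf R d *\<^sub>R measure_pmf.expectation
        (pmf_of_set (Ss m (min d m)) \<bind> (\<lambda>S. bernoulli_pmf eps \<bind> (\<lambda>e. return_pmf (S, e)))) f)"
    unfolding ldgm_gen_def Ss_def[symmetric]
    by (rule pmf_expectation_bind) (use R fin2 in auto)
  also have "\<dots> = (\<Sum>d=1..dmax. pmf R d * ((\<Sum>S\<in>Ss m (min d m). eps * f (S, True) + (1 - eps) * f (S, False))
         / real (card (Ss m (min d m)))))"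
  proof (intro sum.cong refl)
    fix d assume d: "d \<in> {1..dmax}"
    have "measure_pmf.expectation
        (pmf_of_set (Ss m (min d m)) \<bind> (\<lambda>S. bernoulli_pmf eps \<bind> (\<lambda>e. return_pmf (S, e)))) f
      = (\<Sum>S\<in>Ss m (min d m). measure_pmf.expectation (bernoulli_pmf eps \<bind> (\<lambda>e. return_pmf (S, e))) f
           /\<^sub>R real (card (Ss m (min d m))))"
      by (rule pmf_expectation_bind_pmf_of_set) (auto simp: Ss_finite Ss_nonempty gen_inner_finite)
    also have "\<dots> = (\<Sum>S\<in>Ss m (min d m). (eps * f (S, True) + (1 - eps) * f (S, False))
           / real (card (Ss m (min d m))))"
    proof (intro sum.cong refl)
      fix S
      have "measure_pmf.expectation (bernoulli_pmf eps \<bind> (\<lambda>e. return_pmf (S, e))) f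
          = (\<Sum>b\<in>UNIV. pmf (bernoulli_pmf eps) b *\<^sub>R measure_pmf.expectation (return_pmf (S, b)) f)"
        by (rule pmf_expectation_bind) auto
      also have "\<dots> = eps * f (S, True) + (1 - eps) * f (S, False)"
        using e by (simp add: UNIV_bool)
      finally show "measure_pmf.expectation (bernoulli_pmf eps \<bind> (\<lambda>e. return_pmf (S, e))) f /\<^sub>R
          real (card (Ss m (min d m))) = (eps * f (S, True) + (1 - eps) * f (S, False)) / real (card (Ss m (min d m)))"
        by (simp add: divide_inverse_commute)
    qed
    finally show "pmf R d *\<^sub>R measure_pmf.expectation
        (pmf_of_set (Ss m (min d m)) \<bind> (\<lambda>S. bernoulli_pmf eps \<bind> (\<lambda>e. return_pmf (S, e)))) f =
      pmf R d * ((\<Sum>S\<in>Ss m (min d m). eps * f (S, True) + (1 - eps) * f (S, False))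
         / real (card (Ss m (min d m))))"
      by (simp add: sum_divide_distrib)
  qed
  finally show ?thesis .
qed




definition nh :: "nat set \<times> bool \<Rightarrow> nat set \<Rightarrow> real" where
  "nh x B = (if \<not> snd x \<and> fst x \<inter> B \<noteq> {} then 0 else 1)"

definition hi :: "nat set \<times> bool \<Rightarrow> nat \<Rightarrow> real" where
  "hi x i = (if \<not> snd x \<and> i \<in> fst x then 1 else 0)"

definition lowerfun :: "nat \<Rightarrow> nat \<Rightarrow> (nat \<Rightarrow> nat set \<times> bool) \<Rightarrow> real" where
  "lowerfun n i G = (\<Prod>j<n. nh (G j) {i}) +
     (\<Sum>j<n. hi (G j) i * (\<Prod>j'\<in>{..<n}-{j}. nh (G j') {i}) *
        (1 - (\<Prod>k\<in>fst (G j) - {i}. (1 - (\<Prod>j'\<in>{..<n}-{j}. nh (G j') {k})))))"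

lemma not_rec1:
  assumes "\<forall>j<n. \<not> snd (G j) \<longrightarrow> i \<notin> fst (G j)"
  shows "i \<notin> recovered G n"
  using assms by (auto elim: recovered.cases)

lemma not_rec2:
  assumes j0: "j0 < n" "\<not> snd (G j0)" "i \<in> fst (G j0)" "k \<in> fst (G j0)" "k \<noteq> i"
    and oth: "\<forall>j<n. j \<noteq> j0 \<longrightarrow> \<not> snd (G j) \<longrightarrow> i \<notin> fst (G j) \<and> k \<notin> fst (G j)"
  shows "i \<notin> recovered G n"
proof -
  have "x \<noteq> i \<and> x \<noteq> k" if "x \<in> recovered G n" for x
    using that
  proof (induction rule: recovered.induct)
    case (peel j x)
    show ?case
    proof (rule ccontr)
      assume "\<not> (x \<noteq> i \<and> x \<noteq> k)"
      then have "j = j0" using peel.hyps oth by blast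
      show False
      proof (cases "x = i")
        case True
        then show ?thesis using peel.IH j0 \<open>j = j0\<close> by auto
      next
        case False
        then have "x = k" using \<open>\<not> (x \<noteq> i \<and> x \<noteq> k)\<close> by auto
        then show ?thesis using peel.IH j0 \<open>j = j0\<close> by auto
      qed
    qed
  qed
  then show ?thesis by blast
qed

lemma nh01: "nh x B = 0 \<or> nh x B = 1" by (simp add: nh_def)
lemma prod_nh01: "(\<Prod>j\<in>A. nh (G j) B) = 0 \<or> (\<Prod>j\<in>A. nh (G j) B) = 1"
proof (cases "finite A")
  case True then show ?thesis
    by (induction A rule: finite_induct) (auto simp: nh_def)
qed simp

lemma prod_nh_eq1: "finite A \<Longrightarrow> (\<Prod>j\<in>A. nh (G j) B) = 1 \<longleftrightarrow> (\<forall>j\<in>A. nh (G j) B = 1)"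
  by (induction A rule: finite_induct) (auto simp: nh_def)

lemma lowerfun_le:
  "lowerfun n i G \<le> (if i \<notin> recovered G n then 1 else 0)"
proof (cases "\<forall>j<n. \<not> snd (G j) \<longrightarrow> i \<notin> fst (G j)")
  case True
  then have "i \<notin> recovered G n" by (rule not_rec1)
  moreover have "(\<Prod>j<n. nh (G j) {i}) = 1" using True by (auto simp: nh_def intro!: prod.neutral)
  moreover have "hi (G j) i = 0" if "j < n" for j using True that by (auto simp: hi_def)
  ultimately show ?thesis by (simp add: lowerfun_def)
next
  case False
  then obtain j0 where j0: "j0 < n" "\<not> snd (G j0)" "i \<in> fst (G j0)" by auto
  have first0: "(\<Prod>j<n. nh (G j) {i}) = 0"
    using j0 by (intro prod_zero) (auto simp: nh_def intro!: bexI[of _ j0])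
  define T where "T j = hi (G j) i * (\<Prod>j'\<in>{..<n}-{j}. nh (G j') {i}) *
        (1 - (\<Prod>k\<in>fst (G j) - {i}. (1 - (\<Prod>j'\<in>{..<n}-{j}. nh (G j') {k}))))" for j
  have lf: "lowerfun n i G = (\<Sum>j<n. T j)" by (simp add: lowerfun_def first0 T_def)
  show ?thesis
  proof (cases "\<exists>j1<n. j1 \<noteq> j0 \<and> \<not> snd (G j1) \<and> i \<in> fst (G j1)")
    case True
    then obtain j1 where j1: "j1 < n" "j1 \<noteq> j0" "\<not> snd (G j1)" "i \<in> fst (G j1)" by auto
    have "T j = 0" if "j < n" for j
    proof (cases "j = j0")
      case True
      then have "(\<Prod>j'\<in>{..<n}-{j}. nh (G j') {i}) = 0"
        using j1 by (intro prod_zero) (auto simp: nh_def intro!: bexI[of _ j1])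
      then show ?thesis by (simp add: T_def)
    next
      case False
      then have "(\<Prod>j'\<in>{..<n}-{j}. nh (G j') {i}) = 0"
        using j0 by (intro prod_zero) (auto simp: nh_def intro!: bexI[of _ j0])
      then show ?thesis by (simp add: T_def)
    qed
    then show ?thesis by (simp add: lf)
  next
    case False
    then have uniq: "\<forall>j<n. j \<noteq> j0 \<longrightarrow> \<not> snd (G j) \<longrightarrow> i \<notin> fst (G j)" by auto
    have Tz: "T j = 0" if "j < n" "j \<noteq> j0" for j
      using uniq that unfolding T_def hi_def by auto
    have "(\<Sum>j<n. T j) = T j0 + (\<Sum>j\<in>{..<n}-{j0}. T j)"
      using j0 by (intro sum.remove) auto
    also have "(\<Sum>j\<in>{..<n}-{j0}. T j) = 0"
      using Tz by (intro sum.neutral) auto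
    also have "T j0 + 0 \<le> (if i \<notin> recovered G n then 1 else 0)"
    proof (cases "\<exists>k\<in>fst (G j0) - {i}. (\<Prod>j'\<in>{..<n}-{j0}. nh (G j') {k}) = 1")
      case True
      then obtain k where k: "k \<in> fst (G j0)" "k \<noteq> i" "(\<Prod>j'\<in>{..<n}-{j0}. nh (G j') {k}) = 1" by auto
      then have "\<forall>j'\<in>{..<n}-{j0}. nh (G j') {k} = 1" using prod_nh_eq1[of "{..<n}-{j0}" G "{k}"] by simp
      then have "\<forall>j<n. j \<noteq> j0 \<longrightarrow> \<not> snd (G j) \<longrightarrow> i \<notin> fst (G j) \<and> k \<notin> fst (G j)"
      proof (intro allI impI conjI)
        fix j assume jj: "j < n" "j \<noteq> j0" "\<not> snd (G j)"
        assume all1: "\<forall>j'\<in>{..<n}-{j0}. nh (G j') {k} = 1"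
        then have "nh (G j) {k} = 1" using jj by auto
        then show "k \<notin> fst (G j)" using jj(3) unfolding nh_def by (cases "k \<in> fst (G j)") auto
        show "i \<notin> fst (G j)" using uniq jj by blast
      qed
      then have "i \<notin> recovered G n" using not_rec2[of j0 n G i k] j0 k(1,2) by blast
      moreover have "(\<Prod>j'\<in>{..<n}-{j0}. nh (G j') {i}) = 1"
        using uniq by (auto simp: nh_def intro!: prod.neutral)
      moreover have "(\<Prod>k\<in>fst (G j0) - {i}. (1 - (\<Prod>j'\<in>{..<n}-{j0}. nh (G j') {k}))) = 0
          \<or> (\<Prod>k\<in>fst (G j0) - {i}. (1 - (\<Prod>j'\<in>{..<n}-{j0}. nh (G j') {k}))) = 1"
      proof (cases "finite (fst (G j0))")
        case True
        then show ?thesis using k by (intro disjI1 prod_zero) (auto intro!: bexI[of _ k])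
      qed simp
      ultimately show ?thesis using j0 by (auto simp: T_def hi_def)
    next
      case False
      then have "(\<Prod>k\<in>fst (G j0) - {i}. (1 - (\<Prod>j'\<in>{..<n}-{j0}. nh (G j') {k}))) = 1"
      proof (intro prod.neutral ballI)
        fix k assume "k \<in> fst (G j0) - {i}"
        then have "(\<Prod>j'\<in>{..<n}-{j0}. nh (G j') {k}) \<noteq> 1" using False by blast
        then show "1 - (\<Prod>j'\<in>{..<n}-{j0}. nh (G j') {k}) = 1"
          using prod_nh01[where A="{..<n}-{j0}" and G=G and B="{k}"] by simp
      qed
      then show ?thesis by (simp add: T_def)
    qed
    finally show ?thesis by (simp add: lf)
  qed
qed




definition rho :: "nat \<Rightarrow> nat \<Rightarrow> nat \<Rightarrow> real" where
  "rho m b c = 1 - real ((m - b) choose c) / real (m choose c)"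

definition qq :: "nat pmf \<Rightarrow> nat \<Rightarrow> real \<Rightarrow> nat \<Rightarrow> nat \<Rightarrow> real" where
  "qq R dmax eps m b = (1 - eps) * (\<Sum>d=1..dmax. pmf R d * rho m b (min d m))"

lemma miss_count:
  assumes "B \<subseteq> {..<m}"
  shows "card {S\<in>Ss m c. S \<inter> B = {}} = (m - card B) choose c"
proof -
  have "{S\<in>Ss m c. S \<inter> B = {}} = {S. S \<subseteq> {..<m} - B \<and> card S = c}"
    unfolding Ss_def by auto
  moreover have "card ({..<m} - B) = m - card B"
    using assms by (simp add: card_Diff_subset finite_subset)
  ultimately show ?thesis using n_subsets[of "{..<m} - B" c] by simp
qed

lemma sum_if_card: "finite A \<Longrightarrow> (\<Sum>S\<in>A. if P S then (1::real) else 0) = real (card {S\<in>A. P S})"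
  by (simp add: sum.If_cases Int_def conj_commute)

lemma binom_pos: "c \<le> m \<Longrightarrow> real (m choose c) > 0"
  by simp

lemma sum_R1:
  fixes R :: "nat pmf"
  assumes "set_pmf R \<subseteq> {1..dmax}"
  shows "(\<Sum>d=1..dmax. pmf R d) = 1"
  by (rule sum_pmf_eq_1) (use assms in auto)

lemma exp_nh:
  assumes R: "set_pmf R \<subseteq> {1..dmax}" and e: "0 \<le> eps" "eps \<le> 1" and B: "B \<subseteq> {..<m}"
  shows "measure_pmf.expectation (ldgm_gen R eps m) (\<lambda>x. nh x B) = 1 - qq R dmax eps m (card B)"
proof -
  have "measure_pmf.expectation (ldgm_gen R eps m) (\<lambda>x. nh x B) =
     (\<Sum>d=1..dmax. pmf R d * (1 - (1 - eps) * rho m (card B) (min d m)))"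
    unfolding exp_gen[OF R e]
  proof (intro sum.cong refl arg_cong2[where f="(*)"])
    fix d
    define c where "c = min d m"
    have cm: "c \<le> m" by (simp add: c_def)
    have "(\<Sum>S\<in>Ss m c. eps * nh (S, True) B + (1 - eps) * nh (S, False) B)
        = (\<Sum>S\<in>Ss m c. eps + (1 - eps) * (if S \<inter> B = {} then 1 else 0))"
      by (intro sum.cong refl) (auto simp: nh_def)
    also have "\<dots> = eps * real (card (Ss m c)) + (1 - eps) * real (card {S\<in>Ss m c. S \<inter> B = {}})"
      by (simp add: sum.distrib sum_distrib_left[symmetric] sum_if_card Ss_finite)
    also have "\<dots> = eps * real (m choose c) + (1 - eps) * real ((m - card B) choose c)"
      by (simp add: Ss_card miss_count[OF B])
    finally have *: "(\<Sum>S\<in>Ss m c. eps * nh (S, True) B + (1 - eps) * nh (S, False) B)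
        = eps * real (m choose c) + (1 - eps) * real ((m - card B) choose c)" .
    have pos: "real (m choose c) > 0" using cm by simp
    show "(\<Sum>S\<in>Ss m (min d m). eps * nh (S, True) B + (1 - eps) * nh (S, False) B) / real (card (Ss m (min d m)))
       = 1 - (1 - eps) * rho m (card B) (min d m)"
      unfolding c_def[symmetric] * using pos
      by (simp add: rho_def Ss_card field_simps)
  qed
  also have "\<dots> = (\<Sum>d=1..dmax. pmf R d) - (1 - eps) * (\<Sum>d=1..dmax. pmf R d * rho m (card B) (min d m))"
    by (simp add: sum_subtractf sum_distrib_left right_diff_distrib mult_ac)
  also have "\<dots> = 1 - qq R dmax eps m (card B)"
    using sum_R1[OF R] by (simp add: qq_def)
  finally show ?thesis .
qed

lemma exp_hi:
  assumes R: "set_pmf R \<subseteq> {1..dmax}" and e: "0 \<le> eps" "eps \<le> 1" and i: "i < m"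
  shows "measure_pmf.expectation (ldgm_gen R eps m) (\<lambda>x. hi x i * g (card (fst x))) =
     (1 - eps) * (\<Sum>d=1..dmax. pmf R d * rho m 1 (min d m) * g (min d m))"
proof -
  have "measure_pmf.expectation (ldgm_gen R eps m) (\<lambda>x. hi x i * g (card (fst x))) =
     (\<Sum>d=1..dmax. pmf R d * ((1 - eps) * rho m 1 (min d m) * g (min d m)))"
    unfolding exp_gen[OF R e]
  proof (intro sum.cong refl arg_cong2[where f="(*)"])
    fix d
    define c where "c = min d m"
    have cm: "c \<le> m" by (simp add: c_def)
    have "(\<Sum>S\<in>Ss m c. eps * (hi (S, True) i * g (card S)) + (1 - eps) * (hi (S, False) i * g (card S)))
        = (\<Sum>S\<in>Ss m c. (1 - eps) * g c * (if i \<in> S then 1 else 0))"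
      by (intro sum.cong refl) (auto simp: hi_def Ss_def)
    also have "\<dots> = (1 - eps) * g c * real (card {S\<in>Ss m c. i \<in> S})"
      by (simp add: sum_distrib_left[symmetric] sum_if_card Ss_finite)
    also have "card {S\<in>Ss m c. i \<in> S} = card (Ss m c) - card {S\<in>Ss m c. S \<inter> {i} = {}}"
    proof -
      have "{S\<in>Ss m c. i \<in> S} = Ss m c - {S\<in>Ss m c. S \<inter> {i} = {}}" by auto
      then show ?thesis by (simp add: card_Diff_subset Ss_finite)
    qed
    also have "\<dots> = (m choose c) - ((m - 1) choose c)"
      using i miss_count[of "{i}" m c] by (simp add: Ss_card)
    finally have *: "(\<Sum>S\<in>Ss m c. eps * (hi (S, True) i * g (card S)) + (1 - eps) * (hi (S, False) i * g (card S)))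
        = (1 - eps) * g c * real ((m choose c) - ((m - 1) choose c))" .
    have le: "(m - 1) choose c \<le> m choose c" by (rule binomial_right_mono) simp
    have pos: "real (m choose c) > 0" using cm by simp
    show "(\<Sum>S\<in>Ss m (min d m). eps * (hi (S, True) i * g (card (fst (S, True)))) + (1 - eps) * (hi (S, False) i * g (card (fst (S, False))))) / real (card (Ss m (min d m)))
       = (1 - eps) * rho m 1 (min d m) * g (min d m)"
      unfolding c_def[symmetric] fst_conv * using pos le
      by (simp add: rho_def Ss_card field_simps of_nat_diff)
  qed
  also have "\<dots> = (1 - eps) * (\<Sum>d=1..dmax. pmf R d * rho m 1 (min d m) * g (min d m))"
    by (simp add: sum_distrib_left mult_ac)
  finally show ?thesis .
qed




lemma set_gen:
  assumes "y \<in> set_pmf (ldgm_gen R eps m)"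
  shows "fst y \<subseteq> {..<m}"
proof -
  have ne: "Ss m (min d m) \<noteq> {}" for d by (rule Ss_nonempty) simp
  show ?thesis using assms ne Ss_finite
    unfolding ldgm_gen_def Ss_def[symmetric]
    by (auto simp: set_pmf_of_set Ss_def)
qed

lemma fin_gen: "finite (set_pmf (ldgm_gen R eps m))"
proof -
  have "set_pmf (ldgm_gen R eps m) \<subseteq> Pow {..<m} \<times> UNIV"
    using set_gen by force
  then show ?thesis by (rule finite_subset) auto
qed

lemma fin_Pi:
  assumes "finite A" "\<And>x. finite (set_pmf (p x))"
  shows "finite (set_pmf (Pi_pmf A dflt p))"
  using assms by (simp add: set_Pi_pmf finite_PiE_dflt)

lemma exp_pair:
  fixes h :: "'a \<times> 'b \<Rightarrow> real"
  assumes M: "finite (set_pmf M)" and N: "finite (set_pmf N)"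
  shows "measure_pmf.expectation (pair_pmf M N) h =
         measure_pmf.expectation M (\<lambda>x. measure_pmf.expectation N (\<lambda>y. h (x, y)))"
proof -
  have "measure_pmf.expectation (pair_pmf M N) h =
    (\<Sum>a\<in>set_pmf M. pmf M a *\<^sub>R measure_pmf.expectation (N \<bind> (\<lambda>y. return_pmf (a, y))) h)"
    unfolding pair_pmf_def
    by (rule pmf_expectation_bind) (use M N in auto)
  also have "\<dots> = (\<Sum>a\<in>set_pmf M. measure_pmf.expectation N (\<lambda>y. h (a, y)) * pmf M a)"
  proof (intro sum.cong refl)
    fix a
    have "measure_pmf.expectation (N \<bind> (\<lambda>y. return_pmf (a, y))) h =
      (\<Sum>b\<in>set_pmf N. pmf N b *\<^sub>R measure_pmf.expectation (return_pmf (a, b)) h)"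
      by (rule pmf_expectation_bind) (use N in auto)
    also have "\<dots> = (\<Sum>b\<in>set_pmf N. h (a, b) * pmf N b)" by (simp add: mult_ac)
    also have "\<dots> = measure_pmf.expectation N (\<lambda>y. h (a, y))"
      by (rule integral_measure_pmf_real[symmetric]) (use N in auto)
    finally show "pmf M a *\<^sub>R measure_pmf.expectation (N \<bind> (\<lambda>y. return_pmf (a, y))) h =
       measure_pmf.expectation N (\<lambda>y. h (a, y)) * pmf M a" by simp
  qed
  also have "\<dots> = measure_pmf.expectation M (\<lambda>x. measure_pmf.expectation N (\<lambda>y. h (x, y)))"
    by (rule integral_measure_pmf_real[symmetric]) (use M in auto)
  finally show ?thesis .
qed

lemma nh_prod: "finite B \<Longrightarrow> nh x B = (\<Prod>b\<in>B. nh x {b})"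
  by (induction B rule: finite_induct) (auto simp: nh_def)

lemma sum_pow_card:
  assumes "finite K"
  shows "(\<Sum>X\<in>Pow K. f (card X)) = (\<Sum>l\<le>card K. real (card K choose l) * f l)"
proof -
  have "(\<Sum>X\<in>Pow K. f (card X)) = (\<Sum>l\<in>{..card K}. \<Sum>X\<in>{X\<in>Pow K. card X = l}. f (card X))"
    by (rule sum.group[symmetric]) (use assms in \<open>auto intro: card_mono\<close>)
  also have "\<dots> = (\<Sum>l\<le>card K. real (card K choose l) * f l)"
  proof (intro sum.cong refl)
    fix l
    have "card {X\<in>Pow K. card X = l} = card K choose l"
      using n_subsets[OF assms, of l] by (simp add: Pow_def conj_commute)
    then show "(\<Sum>X\<in>{X\<in>Pow K. card X = l}. f (card X)) = real (card K choose l) * f l"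
      by simp
  qed
  finally show ?thesis .
qed

lemma prod_one_minus:
  fixes a :: "'a \<Rightarrow> real"
  assumes "finite K"
  shows "(\<Prod>k\<in>K. 1 - a k) = (\<Sum>X\<in>Pow K. (-1) ^ card X * (\<Prod>k\<in>X. a k))"
proof -
  have "(\<Prod>k\<in>K. 1 - a k) = (\<Prod>k\<in>K. (- a k) + 1)" by simp
  also have "\<dots> = (\<Sum>X\<in>Pow K. (\<Prod>k\<in>X. - a k) * (\<Prod>k\<in>K - X. 1))"
    by (rule prod_add) (rule assms)
  also have "\<dots> = (\<Sum>X\<in>Pow K. (-1) ^ card X * (\<Prod>k\<in>X. a k))"
    by (intro sum.cong refl) (simp add: prod_uminus)
  finally show ?thesis .
qed




definition wv :: "nat pmf \<Rightarrow> nat \<Rightarrow> real \<Rightarrow> nat \<Rightarrow> nat \<Rightarrow> nat \<Rightarrow> real" where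
  "wv R dmax eps m n b = (1 - qq R dmax eps m b) ^ (n - 1)"

definition gfun :: "nat pmf \<Rightarrow> nat \<Rightarrow> real \<Rightarrow> nat \<Rightarrow> nat \<Rightarrow> nat \<Rightarrow> real" where
  "gfun R dmax eps m n c = wv R dmax eps m n 1 -
     (\<Sum>l\<le>c - 1. real (c - 1 choose l) * (-1) ^ l * wv R dmax eps m n (1 + l))"

definition Ffun :: "nat pmf \<Rightarrow> nat \<Rightarrow> real \<Rightarrow> nat \<Rightarrow> nat \<Rightarrow> real" where
  "Ffun R dmax eps m n = (1 - qq R dmax eps m 1) ^ n +
     real n * ((1 - eps) * (\<Sum>d=1..dmax. pmf R d * rho m 1 (min d m) * gfun R dmax eps m n (min d m)))"

context
  fixes R :: "nat pmf" and dmax :: nat and eps :: real and m n :: nat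
  assumes R: "set_pmf R \<subseteq> {1..dmax}" and e: "0 \<le> eps" "eps \<le> 1"
begin

abbreviation "gen \<equiv> ldgm_gen R eps m"

lemma exp_N:
  assumes A: "finite A" and B: "B \<subseteq> {..<m}"
  shows "measure_pmf.expectation (Pi_pmf A dflt (\<lambda>_. gen)) (\<lambda>f. \<Prod>j\<in>A. nh (f j) B)
     = (1 - qq R dmax eps m (card B)) ^ card A"
proof -
  have "measure_pmf.expectation (Pi_pmf A dflt (\<lambda>_. gen)) (\<lambda>f. \<Prod>j\<in>A. nh (f j) B)
     = (\<Prod>j\<in>A. measure_pmf.expectation gen (\<lambda>x. nh x B))"
    by (rule expectation_prod_Pi_pmf) (auto simp: A fin_gen integrable_measure_pmf_finite nh_def)
  also have "\<dots> = (1 - qq R dmax eps m (card B)) ^ card A"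
    by (simp add: exp_nh[OF R e B])
  finally show ?thesis .
qed

lemma exp_Tj:
  assumes j: "j < n" and i: "i < m"
  shows "measure_pmf.expectation (ldgm_graph R eps m n)
     (\<lambda>G. hi (G j) i * (\<Prod>j'\<in>{..<n}-{j}. nh (G j') {i}) *
        (1 - (\<Prod>k\<in>fst (G j) - {i}. (1 - (\<Prod>j'\<in>{..<n}-{j}. nh (G j') {k})))))
   = (1 - eps) * (\<Sum>d=1..dmax. pmf R d * rho m 1 (min d m) * gfun R dmax eps m n (min d m))"
proof -
  define A where "A = {..<n} - {j}"
  have A: "finite A" "j \<notin> A" and nA: "{..<n} = insert j A" and cA: "card A = n - 1"
    using j by (auto simp: A_def)
  define P where "P = Pi_pmf A ({}, True) (\<lambda>_. gen)"
  have finP: "finite (set_pmf P)" unfolding P_def by (rule fin_Pi) (auto simp: A fin_gen)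
  define T where "T G = hi (G j) i * (\<Prod>j'\<in>A. nh (G j') {i}) *
        (1 - (\<Prod>k\<in>fst (G j) - {i}. (1 - (\<Prod>j'\<in>A. nh (G j') {k}))))" for G :: "nat \<Rightarrow> nat set \<times> bool"
  have gr: "ldgm_graph R eps m n = map_pmf (\<lambda>(y, f). f(j := y)) (pair_pmf gen P)"
    unfolding ldgm_graph_def P_def nA by (rule Pi_pmf_insert) (use A in auto)
  have "measure_pmf.expectation (ldgm_graph R eps m n) T
      = measure_pmf.expectation (pair_pmf gen P) (\<lambda>(y, f). T (f(j := y)))"
    by (simp add: gr case_prod_unfold)
  also have "\<dots> = measure_pmf.expectation gen (\<lambda>y. measure_pmf.expectation P (\<lambda>f. T (f(j := y))))"
    using exp_pair[where M=gen and N=P and h="\<lambda>(y, f). T (f(j := y))"] by (simp add: fin_gen finP)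
  also have "\<dots> = measure_pmf.expectation gen (\<lambda>y. hi y i * gfun R dmax eps m n (card (fst y)))"
  proof (intro integral_cong_AE AE_pmfI)
    fix y assume y: "y \<in> set_pmf gen"
    have ym: "fst y \<subseteq> {..<m}" using set_gen[OF y] .
    have fy: "finite (fst y)" using ym finite_subset by blast
    define K where "K = fst y - {i}"
    have K: "finite K" "i \<notin> K" "K \<subseteq> {..<m}" using fy ym by (auto simp: K_def)
    define N where "N f B = (\<Prod>j'\<in>A. nh (f j') B)" for f :: "nat \<Rightarrow> nat set \<times> bool" and B
    have Tf: "T (f(j := y)) = hi y i * (N f {i} - (\<Sum>X\<in>Pow K. (-1) ^ card X * N f (insert i X)))" for f
    proof -
      have "T (f(j := y)) = hi y i * (N f {i} * (1 - (\<Prod>k\<in>K. (1 - N f {k}))))"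
        unfolding T_def N_def K_def mult.assoc using A(2) by (intro arg_cong2[where f="(*)"] arg_cong2[where f="(-)"] prod.cong refl) auto
      also have "(\<Prod>k\<in>K. (1 - N f {k})) = (\<Sum>X\<in>Pow K. (-1) ^ card X * (\<Prod>k\<in>X. N f {k}))"
        by (rule prod_one_minus) (rule K)
      also have "N f {i} * (1 - \<dots>) = N f {i} - (\<Sum>X\<in>Pow K. (-1) ^ card X * (N f {i} * (\<Prod>k\<in>X. N f {k})))"
        by (simp add: right_diff_distrib sum_distrib_left mult_ac)
      also have "(\<Sum>X\<in>Pow K. (-1) ^ card X * (N f {i} * (\<Prod>k\<in>X. N f {k}))) =
                 (\<Sum>X\<in>Pow K. (-1) ^ card X * N f (insert i X))"
      proof (intro sum.cong refl arg_cong2[where f="(*)"])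
        fix X assume X: "X \<in> Pow K"
        then have fX: "finite X" "i \<notin> X" using K finite_subset by auto
        have "N f {i} * (\<Prod>k\<in>X. N f {k}) = (\<Prod>j'\<in>A. nh (f j') {i} * (\<Prod>k\<in>X. nh (f j') {k}))"
          unfolding N_def by (simp add: prod.distrib prod.swap[of _ X])
        also have "\<dots> = N f (insert i X)"
          unfolding N_def using fX by (intro prod.cong refl) (simp add: nh_prod[of "insert i X"] nh_prod[of X])
        finally show "N f {i} * (\<Prod>k\<in>X. N f {k}) = N f (insert i X)" .
      qed
      finally show ?thesis .
    qed
    have EN: "measure_pmf.expectation P (\<lambda>f. N f B) = (1 - qq R dmax eps m (card B)) ^ (n - 1)"
      if "B \<subseteq> {..<m}" for B
      unfolding N_def P_def using exp_N[OF A(1) that] cA by simp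
    have "measure_pmf.expectation P (\<lambda>f. T (f(j := y)))
       = hi y i * (measure_pmf.expectation P (\<lambda>f. N f {i}) -
           (\<Sum>X\<in>Pow K. (-1) ^ card X * measure_pmf.expectation P (\<lambda>f. N f (insert i X))))"
    proof -
      have int: "integrable P g" for g :: "_ \<Rightarrow> real" by (rule integrable_measure_pmf_finite[OF finP])
      show ?thesis
        unfolding Tf integral_mult_right_zero
        apply (subst Bochner_Integration.integral_diff[OF int int])
        apply (subst Bochner_Integration.integral_sum[OF int])
        apply (simp only: integral_mult_right_zero)
        done
    qed
    also have "\<dots> = hi y i * (wv R dmax eps m n 1 -
           (\<Sum>X\<in>Pow K. (-1) ^ card X * wv R dmax eps m n (1 + card X)))"
    proof -
      have XK: "finite X \<and> i \<notin> X \<and> insert i X \<subseteq> {..<m}" if "X \<in> Pow K" for X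
      proof -
        have "X \<subseteq> K" using that by simp
        then show ?thesis using K i by (meson Set.insert_subset finite_subset lessThan_iff subset_iff)
      qed
      show ?thesis
      proof (intro arg_cong2[where f="(*)"] arg_cong2[where f="(-)"] sum.cong refl)
        show "measure_pmf.expectation P (\<lambda>f. N f {i}) = wv R dmax eps m n 1"
          using i by (simp add: EN wv_def)
        fix X assume "X \<in> Pow K"
        then have "finite X" "i \<notin> X" "insert i X \<subseteq> {..<m}" using XK by auto
        then show "measure_pmf.expectation P (\<lambda>f. N f (insert i X)) = wv R dmax eps m n (1 + card X)"
          by (simp add: EN wv_def)
      qed
    qed
    also have "\<dots> = hi y i * gfun R dmax eps m n (card (fst y))"
    proof (cases "i \<in> fst y")
      case True
      then have "card K = card (fst y) - 1" using fy by (simp add: K_def)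
      then show ?thesis
        using sum_pow_card[OF K(1), of "\<lambda>l. (-1) ^ l * wv R dmax eps m n (1 + l)"]
        by (simp add: gfun_def mult_ac)
    next
      case False then show ?thesis by (simp add: hi_def)
    qed
    finally show "measure_pmf.expectation P (\<lambda>f. T (f(j := y))) = hi y i * gfun R dmax eps m n (card (fst y))" .
  qed simp_all
  also have "\<dots> = (1 - eps) * (\<Sum>d=1..dmax. pmf R d * rho m 1 (min d m) * gfun R dmax eps m n (min d m))"
    by (rule exp_hi[OF R e i])
  finally show ?thesis unfolding T_def A_def .
qed

lemma fin_graph: "finite (set_pmf (ldgm_graph R eps m n))"
  unfolding ldgm_graph_def by (rule fin_Pi) (auto simp: fin_gen)

lemma exp_lower:
  assumes i: "i < m"
  shows "measure_pmf.expectation (ldgm_graph R eps m n) (lowerfun n i) = Ffun R dmax eps m n"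
proof -
  have int: "integrable (ldgm_graph R eps m n) g" for g :: "_ \<Rightarrow> real"
    by (rule integrable_measure_pmf_finite[OF fin_graph])
  have "measure_pmf.expectation (ldgm_graph R eps m n) (lowerfun n i) =
     measure_pmf.expectation (ldgm_graph R eps m n) (\<lambda>G. \<Prod>j<n. nh (G j) {i}) +
     (\<Sum>j<n. measure_pmf.expectation (ldgm_graph R eps m n) (\<lambda>G. hi (G j) i * (\<Prod>j'\<in>{..<n}-{j}. nh (G j') {i}) *
        (1 - (\<Prod>k\<in>fst (G j) - {i}. (1 - (\<Prod>j'\<in>{..<n}-{j}. nh (G j') {k}))))))"
    unfolding lowerfun_def
    apply (subst Bochner_Integration.integral_add[OF int int])
    apply (subst Bochner_Integration.integral_sum[OF int])
    apply (rule refl)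
    done
  also have "measure_pmf.expectation (ldgm_graph R eps m n) (\<lambda>G. \<Prod>j<n. nh (G j) {i}) = (1 - qq R dmax eps m 1) ^ n"
    unfolding ldgm_graph_def using exp_N[of "{..<n}" "{i}"] i by simp
  also have "(\<Sum>j<n. measure_pmf.expectation (ldgm_graph R eps m n) (\<lambda>G. hi (G j) i * (\<Prod>j'\<in>{..<n}-{j}. nh (G j') {i}) *
        (1 - (\<Prod>k\<in>fst (G j) - {i}. (1 - (\<Prod>j'\<in>{..<n}-{j}. nh (G j') {k}))))))
     = (\<Sum>j<n. (1 - eps) * (\<Sum>d=1..dmax. pmf R d * rho m 1 (min d m) * gfun R dmax eps m n (min d m)))"
    by (intro sum.cong refl exp_Tj i) simp
  finally show ?thesis by (simp add: Ffun_def)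
qed

lemma ber_bound:
  assumes m: "0 < m"
  shows "1/2 * Ffun R dmax eps m n \<le> bit_error_prob R eps m n"
proof -
  have int: "integrable (ldgm_graph R eps m n) g" for g :: "_ \<Rightarrow> real"
    by (rule integrable_measure_pmf_finite[OF fin_graph])
  have "bit_error_prob R eps m n = (1 / real m) * (\<Sum>i<m. 1/2 *
     measure_pmf.expectation (ldgm_graph R eps m n) (\<lambda>G. if i \<notin> recovered G n then 1 else 0))"
    unfolding bit_error_prob_def
    by (intro arg_cong2[where f="(*)"] sum.cong refl pair_half fin_graph)
  also have "\<dots> \<ge> (1 / real m) * (\<Sum>i<m. 1/2 * Ffun R dmax eps m n)"
  proof (rule mult_left_mono, rule sum_mono)
    fix i assume "i \<in> {..<m}"
    then have "Ffun R dmax eps m n = measure_pmf.expectation (ldgm_graph R eps m n) (lowerfun n i)"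
      by (simp add: exp_lower)
    also have "\<dots> \<le> measure_pmf.expectation (ldgm_graph R eps m n) (\<lambda>G. if i \<notin> recovered G n then 1 else 0)"
      by (rule Bochner_Integration.integral_mono[OF int int lowerfun_le])
    finally show "1/2 * Ffun R dmax eps m n \<le> 1/2 *
     measure_pmf.expectation (ldgm_graph R eps m n) (\<lambda>G. if i \<notin> recovered G n then 1 else 0)" by simp
  qed simp
  also have "(1 / real m) * (\<Sum>i<m. 1/2 * Ffun R dmax eps m n) = 1/2 * Ffun R dmax eps m n"
    using m by simp
  finally show ?thesis .
qed

end



lemma exp_lower_bd:
  fixes q :: real assumes "q < 1"
  shows "exp (- (q / (1 - q))) \<le> 1 - q"
proof -
  have "1 + q / (1 - q) \<le> exp (q / (1 - q))" by (rule exp_ge_add_one_self)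
  moreover have "1 + q / (1 - q) = 1 / (1 - q)" using assms by (simp add: field_simps)
  ultimately have "1 / (1 - q) \<le> exp (q / (1 - q))" by simp
  then have "inverse (exp (q / (1 - q))) \<le> inverse (1 / (1 - q))"
    using assms by (intro le_imp_inverse_le) auto
  then show ?thesis using assms by (simp add: exp_minus)
qed

lemma pow_lim:
  fixes q :: "nat \<Rightarrow> real" and N :: "nat \<Rightarrow> nat"
  assumes q0: "q \<longlonglongrightarrow> 0" and Nq: "(\<lambda>k. real (N k) * q k) \<longlonglongrightarrow> c"
  shows "(\<lambda>k. (1 - q k) ^ N k) \<longlonglongrightarrow> exp (- c)"
proof (rule tendsto_sandwich)
  have ev: "eventually (\<lambda>k. q k < 1) sequentially"
    using q0 by (rule order_tendstoD) simp
  show "eventually (\<lambda>k. exp (- (real (N k) * q k / (1 - q k))) \<le> (1 - q k) ^ N k) sequentially"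
    using ev
  proof eventually_elim
    case (elim k)
    have "exp (- (real (N k) * q k / (1 - q k))) = exp (- (q k / (1 - q k))) ^ N k"
      by (simp add: exp_of_nat_mult[symmetric])
    also have "\<dots> \<le> (1 - q k) ^ N k"
      by (rule power_mono[OF exp_lower_bd[OF elim]]) simp
    finally show ?case .
  qed
  show "eventually (\<lambda>k. (1 - q k) ^ N k \<le> exp (- (real (N k) * q k))) sequentially"
    using ev
  proof eventually_elim
    case (elim k)
    have "(1 - q k) ^ N k \<le> exp (- q k) ^ N k"
      by (rule power_mono) (use exp_ge_add_one_self[of "- q k"] elim in auto)
    also have "\<dots> = exp (- (real (N k) * q k))"
      by (simp add: exp_of_nat_mult[symmetric])
    finally show ?case .
  qed
  have "(\<lambda>k. real (N k) * q k / (1 - q k)) \<longlonglongrightarrow> c / (1 - 0)"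
    by (intro tendsto_intros Nq q0) simp
  then show "(\<lambda>k. exp (- (real (N k) * q k / (1 - q k)))) \<longlonglongrightarrow> exp (- c)"
    by (auto intro!: tendsto_intros)
  show "(\<lambda>k. exp (- (real (N k) * q k))) \<longlonglongrightarrow> exp (- c)"
    by (intro tendsto_intros Nq)
qed

lemma prod_lim:
  fixes b :: real
  shows "(\<lambda>m::nat. \<Prod>t<d. 1 - b / (real m - real t)) \<longlonglongrightarrow> 1 \<and>
         (\<lambda>m::nat. real m * (1 - (\<Prod>t<d. 1 - b / (real m - real t)))) \<longlonglongrightarrow> b * real d"
proof (induction d)
  case 0
  then show ?case by simp
next
  case (Suc d)
  define P where "P m = (\<Prod>t<d. 1 - b / (real m - real t))" for m :: nat
  have P1: "P \<longlonglongrightarrow> 1" and P2: "(\<lambda>m. real m * (1 - P m)) \<longlonglongrightarrow> b * real d"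
    using Suc by (simp_all add: P_def[abs_def])
  have x0: "(\<lambda>m::nat. b / (real m - real d)) \<longlonglongrightarrow> 0" by real_asymp
  have x1: "(\<lambda>m::nat. real m * (b / (real m - real d))) \<longlonglongrightarrow> b" by real_asymp
  have e1: "(\<Prod>t<Suc d. 1 - b / (real m - real t)) = P m * (1 - b / (real m - real d))" for m
    by (simp add: P_def)
  have e2: "real m * (1 - P m * (1 - b / (real m - real d))) =
      real m * (1 - P m) + P m * (real m * (b / (real m - real d)))" for m
    by (simp add: algebra_simps)
  have "(\<lambda>m. P m * (1 - b / (real m - real d))) \<longlonglongrightarrow> 1 * (1 - 0)"
    by (intro tendsto_intros P1 x0)
  moreover have "(\<lambda>m. real m * (1 - P m) + P m * (real m * (b / (real m - real d)))) \<longlonglongrightarrow> b * real d + 1 * b"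
    by (intro tendsto_intros P1 P2 x1)
  ultimately show ?case
    unfolding e1 e2 by (simp add: algebra_simps)
qed

definition rho' :: "nat \<Rightarrow> nat \<Rightarrow> nat \<Rightarrow> real" where
  "rho' m b c = 1 - real ((m - b) choose c) / real (m choose c)"

lemma choose_ratio:
  assumes "b + d \<le> m"
  shows "real ((m - b) choose d) / real (m choose d) = (\<Prod>t<d. 1 - real b / (real m - real t))"
proof -
  have "real ((m - b) choose d) = (\<Prod>t<d. real (m - b) - real t) / fact d"
    by (simp add: binomial_gbinomial gbinomial_prod_rev atLeast0LessThan)
  moreover have "real (m choose d) = (\<Prod>t<d. real m - real t) / fact d"
    by (simp add: binomial_gbinomial gbinomial_prod_rev atLeast0LessThan)
  moreover have "(\<Prod>t<d. real m - real t) \<noteq> 0" using assms by auto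
  ultimately have "real ((m - b) choose d) / real (m choose d) = (\<Prod>t<d. real (m - b) - real t) / (\<Prod>t<d. real m - real t)"
    by simp
  also have "\<dots> = (\<Prod>t<d. (real (m - b) - real t) / (real m - real t))"
    by (rule prod_dividef[symmetric])
  also have "\<dots> = (\<Prod>t<d. 1 - real b / (real m - real t))"
    using assms by (intro prod.cong refl) (auto simp: field_simps of_nat_diff)
  finally show ?thesis .
qed

lemma rho_lim: "(\<lambda>m. real m * rho' m b d) \<longlonglongrightarrow> real b * real d"
proof -
  have "(\<lambda>m::nat. real m * (1 - (\<Prod>t<d. 1 - real b / (real m - real t)))) \<longlonglongrightarrow> real b * real d"
    using prod_lim[where b="real b" and d=d] by simp
  moreover have "eventually (\<lambda>m. real m * (1 - (\<Prod>t<d. 1 - real b / (real m - real t))) = real m * rho' m b d) sequentially"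
    using eventually_ge_at_top[of "b + d"]
    by eventually_elim (simp add: rho'_def choose_ratio)
  ultimately show ?thesis by (rule Lim_transform_eventually)
qed




lemma rho_eq: "rho = rho'" by (simp add: fun_eq_iff rho_def rho'_def)

lemma binom_L:
  fixes L :: real
  shows "(\<Sum>l\<le>c. real (c choose l) * (-1) ^ l * L ^ (1 + l)) = L * (1 - L) ^ c"
proof -
  have "(1 - L) ^ c = (- L + 1) ^ c" by simp
  also have "\<dots> = (\<Sum>l\<le>c. real (c choose l) * (- L) ^ l * 1 ^ (c - l))"
    by (rule binomial_ring)
  finally have e: "(1 - L) ^ c = (\<Sum>l\<le>c. real (c choose l) * (- L) ^ l * 1 ^ (c - l))" .
  have "(\<Sum>l\<le>c. real (c choose l) * (-1) ^ l * L ^ (1 + l)) = (\<Sum>l\<le>c. L * (real (c choose l) * (- L) ^ l * 1 ^ (c - l)))"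
  proof (rule sum.cong[OF refl])
    fix l
    have "(- L) ^ l = (-1) ^ l * L ^ l" by (rule power_minus)
    moreover have "L ^ (1 + l) = L * L ^ l" by simp
    ultimately show "real (c choose l) * (-1) ^ l * L ^ (1 + l) = L * (real (c choose l) * (- L) ^ l * 1 ^ (c - l))"
      by simp
  qed
  also have "\<dots> = L * (1 - L) ^ c" by (simp only: e sum_distrib_left)
  finally show ?thesis .
qed

lemma Rder_pos:
  assumes R: "set_pmf R \<subseteq> {1..dmax}"
  shows "Rder dmax R 1 \<ge> 1"
proof -
  have "(\<Sum>d=1..dmax. pmf R d) \<le> (\<Sum>d=1..dmax. real d * pmf R d * 1 ^ (d - 1))"
  proof (rule sum_mono)
    fix d assume "d \<in> {1..dmax}"
    then have "1 * pmf R d \<le> real d * pmf R d" by (intro mult_right_mono) auto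
    then show "pmf R d \<le> real d * pmf R d * 1 ^ (d - 1)" by simp
  qed
  then show ?thesis using sum_R1[OF R] by (simp add: Rder_def)
qed

lemma part1:
  fixes R :: "nat pmf" and dmax :: nat and r eps P :: real
    and ms ns :: "nat \<Rightarrow> nat"
  assumes R: "set_pmf R \<subseteq> {1..dmax}"
    and r: "r > 0" and e: "0 < eps" "eps < 1"
    and ms: "filterlim ms at_top sequentially"
    and nm: "(\<lambda>k. real (ns k) / real (ms k)) \<longlonglongrightarrow> 1 / r"
    and P: "(\<lambda>k. bit_error_prob R eps (ms k) (ns k)) \<longlonglongrightarrow> P"
  shows "ldgm_bound dmax R r eps \<le> P"
proof -
  define D where "D = Rder dmax R 1"
  define L where "L = lam dmax R r eps"
  have D1: "D \<ge> 1" unfolding D_def by (rule Rder_pos[OF R])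
  have Dsum: "D = (\<Sum>d=1..dmax. real d * pmf R d)" by (simp add: D_def Rder_def)
  have Lb: "L ^ b = exp (- (1 / r * ((1 - eps) * real b * D)))" for b
  proof -
    have "real b * (D / r * (eps - 1)) = - (1 / r * ((1 - eps) * real b * D))"
      using r by (simp add: field_simps)
    then show ?thesis by (simp add: L_def lam_def lavg_def D_def[symmetric] exp_of_nat_mult[symmetric])
  qed
  have evm: "eventually (\<lambda>k. N \<le> ms k) sequentially" for N
    using ms by (simp add: filterlim_at_top)
  have m0: "eventually (\<lambda>k. 0 < ms k) sequentially"
    using evm[of 1] by eventually_elim simp
  have n0: "eventually (\<lambda>k. 0 < ns k) sequentially"
  proof -
    have "eventually (\<lambda>k. real (ns k) / real (ms k) > 0) sequentially"
      using nm by (rule order_tendstoD) (use r in simp)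
    then show ?thesis by eventually_elim (auto intro: gr0I)
  qed
  have inv0: "(\<lambda>k. 1 / real (ms k)) \<longlonglongrightarrow> 0"
    by (rule filterlim_compose[OF lim_1_over_n ms])
  have rlim: "(\<lambda>k. real (ms k) * rho (ms k) b d) \<longlonglongrightarrow> real b * real d" for b d
    unfolding rho_eq by (rule filterlim_compose[OF rho_lim ms])
  have mQ: "(\<lambda>k. real (ms k) * qq R dmax eps (ms k) b) \<longlonglongrightarrow> (1 - eps) * real b * D" for b
  proof -
    have lim: "(\<lambda>k. (1 - eps) * (\<Sum>d=1..dmax. pmf R d * (real (ms k) * rho (ms k) b d)))
        \<longlonglongrightarrow> (1 - eps) * (\<Sum>d=1..dmax. pmf R d * (real b * real d))"
      by (intro tendsto_intros rlim)
    have eqv: "(1 - eps) * (\<Sum>d=1..dmax. pmf R d * (real b * real d)) = (1 - eps) * real b * D"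
      by (simp add: Dsum sum_distrib_left mult_ac)
    have ev: "eventually (\<lambda>k. (1 - eps) * (\<Sum>d=1..dmax. pmf R d * (real (ms k) * rho (ms k) b d))
        = real (ms k) * qq R dmax eps (ms k) b) sequentially"
      using evm[of dmax]
    proof eventually_elim
      case (elim k)
      then have mins: "d \<in> {1..dmax} \<Longrightarrow> min d (ms k) = d" for d by auto
      have "(\<Sum>d=1..dmax. pmf R d * (real (ms k) * rho (ms k) b d)) = (\<Sum>d=1..dmax. pmf R d * (real (ms k) * rho (ms k) b (min d (ms k))))"
        using mins by (intro sum.cong) auto
      then show ?case by (simp add: qq_def sum_distrib_left mult_ac)
    qed
    show ?thesis unfolding eqv[symmetric] by (rule Lim_transform_eventually[OF lim ev])
  qed
  have Q0: "(\<lambda>k. qq R dmax eps (ms k) b) \<longlonglongrightarrow> 0" for b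
  proof -
    have "(\<lambda>k. real (ms k) * qq R dmax eps (ms k) b * (1 / real (ms k))) \<longlonglongrightarrow> 0"
      using tendsto_mult[OF mQ[of b] inv0] by simp
    moreover have "eventually (\<lambda>k. real (ms k) * qq R dmax eps (ms k) b * (1 / real (ms k)) = qq R dmax eps (ms k) b) sequentially"
      using m0 by eventually_elim simp
    ultimately show ?thesis by (rule Lim_transform_eventually)
  qed
  have nQ: "(\<lambda>k. real (ns k) * qq R dmax eps (ms k) b) \<longlonglongrightarrow> 1 / r * ((1 - eps) * real b * D)" for b
  proof -
    have "(\<lambda>k. real (ns k) / real (ms k) * (real (ms k) * qq R dmax eps (ms k) b)) \<longlonglongrightarrow> 1 / r * ((1 - eps) * real b * D)"
      by (intro tendsto_intros mQ nm)
    moreover have "eventually (\<lambda>k. real (ns k) / real (ms k) * (real (ms k) * qq R dmax eps (ms k) b) = real (ns k) * qq R dmax eps (ms k) b) sequentially"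
      using m0 by eventually_elim simp
    ultimately show ?thesis by (rule Lim_transform_eventually)
  qed
  have powN: "(\<lambda>k. (1 - qq R dmax eps (ms k) b) ^ ns k) \<longlonglongrightarrow> L ^ b" for b
    unfolding Lb by (rule pow_lim[OF Q0 nQ])
  have Wlim: "(\<lambda>k. wv R dmax eps (ms k) (ns k) b) \<longlonglongrightarrow> L ^ b" for b
  proof -
    have "(\<lambda>k. real (ns k) * qq R dmax eps (ms k) b - qq R dmax eps (ms k) b) \<longlonglongrightarrow> 1 / r * ((1 - eps) * real b * D)"
      using tendsto_diff[OF nQ[of b] Q0[of b]] by simp
    moreover have "eventually (\<lambda>k. real (ns k) * qq R dmax eps (ms k) b - qq R dmax eps (ms k) b = real (ns k - 1) * qq R dmax eps (ms k) b) sequentially"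
      using n0 by eventually_elim (simp add: of_nat_diff algebra_simps)
    ultimately have "(\<lambda>k. real (ns k - 1) * qq R dmax eps (ms k) b) \<longlonglongrightarrow> 1 / r * ((1 - eps) * real b * D)"
      by (rule Lim_transform_eventually)
    then show ?thesis unfolding Lb wv_def by (rule pow_lim[OF Q0])
  qed
  have glim: "(\<lambda>k. gfun R dmax eps (ms k) (ns k) d) \<longlonglongrightarrow>
      L - (\<Sum>l\<le>d - 1. real (d - 1 choose l) * (-1) ^ l * L ^ (1 + l))" for d
  proof -
    have W1: "(\<lambda>k. wv R dmax eps (ms k) (ns k) 1) \<longlonglongrightarrow> L" using Wlim[of 1] by simp
    show ?thesis unfolding gfun_def by (intro tendsto_intros W1 Wlim)
  qed
  have nrho: "(\<lambda>k. real (ns k) * rho (ms k) 1 d) \<longlonglongrightarrow> 1 / r * real d" for d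
  proof -
    have "(\<lambda>k. real (ns k) / real (ms k) * (real (ms k) * rho (ms k) 1 d)) \<longlonglongrightarrow> 1 / r * real d"
      using tendsto_mult[OF nm rlim[of 1 d]] by simp
    moreover have "eventually (\<lambda>k. real (ns k) / real (ms k) * (real (ms k) * rho (ms k) 1 d) = real (ns k) * rho (ms k) 1 d) sequentially"
      using m0 by eventually_elim simp
    ultimately show ?thesis by (rule Lim_transform_eventually)
  qed
  define X where "X = L + (1 - eps) * (\<Sum>d=1..dmax. pmf R d * (1 / r * real d) *
      (L - (\<Sum>l\<le>d - 1. real (d - 1 choose l) * (-1) ^ l * L ^ (1 + l))))"
  have Flim: "(\<lambda>k. Ffun R dmax eps (ms k) (ns k)) \<longlonglongrightarrow> X"
  proof -
    have "(\<lambda>k. (1 - qq R dmax eps (ms k) 1) ^ ns k + (1 - eps) * (\<Sum>d=1..dmax. pmf R d * (real (ns k) * rho (ms k) 1 d) *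
        gfun R dmax eps (ms k) (ns k) d)) \<longlonglongrightarrow> X"
      unfolding X_def using powN[of 1] by (intro tendsto_intros nrho glim) simp_all
    moreover have "eventually (\<lambda>k. (1 - qq R dmax eps (ms k) 1) ^ ns k + (1 - eps) * (\<Sum>d=1..dmax. pmf R d * (real (ns k) * rho (ms k) 1 d) *
        gfun R dmax eps (ms k) (ns k) d) = Ffun R dmax eps (ms k) (ns k)) sequentially"
      using evm[of dmax]
    proof eventually_elim
      case (elim k)
      then have mins: "d \<in> {1..dmax} \<Longrightarrow> min d (ms k) = d" for d by auto
      have "(\<Sum>d=1..dmax. pmf R d * (real (ns k) * rho (ms k) 1 d) * gfun R dmax eps (ms k) (ns k) d)
        = (\<Sum>d=1..dmax. pmf R d * (real (ns k) * rho (ms k) 1 (min d (ms k))) * gfun R dmax eps (ms k) (ns k) (min d (ms k)))"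
        using mins by (intro sum.cong) auto
      then show ?case by (simp add: Ffun_def sum_distrib_left mult_ac)
    qed
    ultimately show ?thesis by (rule Lim_transform_eventually)
  qed
  have X: "X = 2 * ldgm_bound dmax R r eps"
  proof -
    define RL where "RL = Rder dmax R (1 - L)"
    have RLs: "RL = (\<Sum>d=1..dmax. real d * pmf R d * (1 - L) ^ (d - 1))" by (simp add: RL_def Rder_def)
    have "(\<Sum>d=1..dmax. pmf R d * (1 / r * real d) *
      (L - (\<Sum>l\<le>d - 1. real (d - 1 choose l) * (-1) ^ l * L ^ (1 + l))))
      = (\<Sum>d=1..dmax. L / r * (real d * pmf R d - real d * pmf R d * (1 - L) ^ (d - 1)))"
      using r by (intro sum.cong refl) (simp only: binom_L, simp add: field_simps)
    also have "\<dots> = L / r * (D - RL)"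
      unfolding Dsum RLs sum_subtractf[symmetric] sum_distrib_left ..
    finally have s1: "X = L + (1 - eps) * (L / r * (D - RL))" by (simp add: X_def)
    have "ldgm_bound dmax R r eps = 1/2 * L * (1 + D / r * (1 - eps) * (1 - RL / D))"
      unfolding ldgm_bound_def lavg_def L_def[symmetric] D_def[symmetric] RL_def ..
    moreover have "D / r * (1 - eps) * (1 - RL / D) = (1 - eps) * (D - RL) / r"
      using D1 r by (simp add: field_simps)
    ultimately have b: "ldgm_bound dmax R r eps = 1/2 * L * (1 + (1 - eps) * (D - RL) / r)" by simp
    show ?thesis unfolding s1 b using r by (simp add: field_simps)
  qed
  have lim: "(\<lambda>k. 1/2 * Ffun R dmax eps (ms k) (ns k)) \<longlonglongrightarrow> 1/2 * X"
    by (intro tendsto_intros Flim)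
  have ev: "eventually (\<lambda>k. 1/2 * Ffun R dmax eps (ms k) (ns k) \<le> bit_error_prob R eps (ms k) (ns k)) sequentially"
    using m0 by eventually_elim (rule ber_bound[OF R], use e in auto)
  have "1/2 * X \<le> P" by (rule tendsto_le[OF trivial_limit_sequentially P lim ev])
  then show ?thesis by (simp add: X)
qed




lemma bound_ge:
  assumes R: "set_pmf R \<subseteq> {1..dmax}" and r: "r > 0" and e: "0 < eps" "eps < 1"
  shows "1/2 * exp (- (Rder dmax R 1 * (1 - eps) / r)) \<le> ldgm_bound dmax R r eps"
proof -
  define D where "D = Rder dmax R 1"
  define L where "L = lam dmax R r eps"
  have D1: "D \<ge> 1" unfolding D_def by (rule Rder_pos[OF R])
  have Le: "L = exp (- (D * (1 - eps) / r))"
    using r by (simp add: L_def lam_def lavg_def D_def field_simps)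
  have L0: "0 < L" by (simp add: Le)
  have L1: "L \<le> 1" unfolding Le using D1 r e by (simp add: field_simps)
  have "Rder dmax R (1 - L) \<le> D"
    unfolding D_def Rder_def
  proof (rule sum_mono)
    fix d assume "d \<in> {1..dmax}"
    have "(1 - L) ^ (d - 1) \<le> 1" using L0 L1 by (intro power_le_one) auto
    then have "real d * pmf R d * (1 - L) ^ (d - 1) \<le> real d * pmf R d * 1"
      by (intro mult_left_mono) (auto simp: pmf_nonneg)
    then show "real d * pmf R d * (1 - L) ^ (d - 1) \<le> real d * pmf R d * 1 ^ (d - 1)" by simp
  qed
  then have "0 \<le> 1 - Rder dmax R (1 - L) / D" using D1 by (simp add: field_simps)
  moreover have "0 \<le> lavg dmax R r" using D1 r by (simp add: lavg_def D_def[symmetric])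
  ultimately have "0 \<le> lavg dmax R r * (1 - eps) * (1 - Rder dmax R (1 - L) / D)"
    using e by (intro mult_nonneg_nonneg) auto
  then have "1/2 * L * 1 \<le> 1/2 * L * (1 + lavg dmax R r * (1 - eps) * (1 - Rder dmax R (1 - L) / D))"
    using L0 by (intro mult_left_mono) auto
  then show ?thesis
    unfolding ldgm_bound_def L_def[symmetric] D_def[symmetric] by (simp add: Le)
qed

lemma part2:
  assumes r: "r > 0" and e: "0 < eps" "eps < 1"
  shows "\<forall>(Rs :: nat \<Rightarrow> nat pmf) (ds :: nat \<Rightarrow> nat).
        (\<forall>k. set_pmf (Rs k) \<subseteq> {1..ds k}) \<longrightarrow>
        (\<lambda>k. ldgm_bound (ds k) (Rs k) r eps) \<longlonglongrightarrow> 0 \<longrightarrow>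
        filterlim (\<lambda>k. Rder (ds k) (Rs k) 1) at_top sequentially"
proof (intro allI impI)
  fix Rs :: "nat \<Rightarrow> nat pmf" and ds :: "nat \<Rightarrow> nat"
  assume Rs: "\<forall>k. set_pmf (Rs k) \<subseteq> {1..ds k}"
    and lim: "(\<lambda>k. ldgm_bound (ds k) (Rs k) r eps) \<longlonglongrightarrow> 0"
  show "filterlim (\<lambda>k. Rder (ds k) (Rs k) 1) at_top sequentially"
    unfolding filterlim_at_top
  proof
    fix Z :: real
    define c where "c = 1/2 * exp (- (Z * (1 - eps) / r))"
    have "c > 0" by (simp add: c_def)
    then have "eventually (\<lambda>k. ldgm_bound (ds k) (Rs k) r eps < c) sequentially"
      using lim by (rule order_tendstoD(2)[rotated])
    then show "eventually (\<lambda>k. Z \<le> Rder (ds k) (Rs k) 1) sequentially"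
    proof eventually_elim
      case (elim k)
      have "1/2 * exp (- (Rder (ds k) (Rs k) 1 * (1 - eps) / r)) < 1/2 * exp (- (Z * (1 - eps) / r))"
        using bound_ge[OF Rs[rule_format, of k] r e] elim unfolding c_def by linarith
      then have "- (Rder (ds k) (Rs k) 1 * (1 - eps) / r) < - (Z * (1 - eps) / r)" by simp
      then have "Z * (1 - eps) / r < Rder (ds k) (Rs k) 1 * (1 - eps) / r" by simp
      then have "Z * (1 - eps) < Rder (ds k) (Rs k) 1 * (1 - eps)" using r by (simp add: divide_less_cancel)
      then show ?case using e by (simp add: mult_less_cancel_right)
    qed
  qed
qed

theorem mainTheorem2:
  fixes R :: "nat pmf" and dmax :: nat and r eps P :: real
    and ms ns :: "nat \<Rightarrow> nat"
  assumes "set_pmf R \<subseteq> {1..dmax}"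
    and "r > 0" and "0 < eps" and "eps < 1"
    and "filterlim ms at_top sequentially"
    and "(\<lambda>k. real (ns k) / real (ms k)) \<longlonglongrightarrow> 1 / r"
    and "(\<lambda>k. bit_error_prob R eps (ms k) (ns k)) \<longlonglongrightarrow> P"
  shows "ldgm_bound dmax R r eps \<le> P \<and>
    (\<forall>(Rs :: nat \<Rightarrow> nat pmf) (ds :: nat \<Rightarrow> nat).
        (\<forall>k. set_pmf (Rs k) \<subseteq> {1..ds k}) \<longrightarrow>
        (\<lambda>k. ldgm_bound (ds k) (Rs k) r eps) \<longlonglongrightarrow> 0 \<longrightarrow>
        filterlim (\<lambda>k. Rder (ds k) (Rs k) 1) at_top sequentially)"
  using part1[OF assms] part2[OF assms(2-4)] by blast


end
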